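(* Let $f : \{0, 1\}^n \to \{0, 1\}$ be a Boolean function. Then $\mathsf{Pat}^{\mathsf{M}}(f) \geq \mathrm{spar}(f)$.
   Context: Every $f:\{0,1\}^n\to\{0,1\}$ has a unique M\"obius expansion $f=\sum_{S\subseteq[n]}\widetilde f(S)\mathsf{AND}_S$ with real coefficients, where $\mathsf{AND}_S(x)=\prod_{i\in S}x_i$; its M\"obius support is $\mathcal{S}_f=\{S:\widetilde f(S)\ne0\}$ and its M\"obius sparsity is $\mathrm{spar}(f)=|\mathcal S_f|$. The pattern of $x$ is $(\mathsf{AND}_S(x))_{S\in\mathcal S_f}$, and $\mathsf{Pat}^{\mathsf{M}}(f)$ is the number of distinct patterns over all $x\in\{0,1\}^n$. *)

theory Defs
  imports Complex_Main
begin

text \<open>Inputs x in {0,1}^n are bool lists of length n (x_i = 1 iff x ! i);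
  coordinates are indexed by {..<n}.\<close>

definition cube :: "nat \<Rightarrow> bool list set" where
  "cube n = {xs. length xs = n}"

definition AND :: "nat set \<Rightarrow> bool list \<Rightarrow> real" where
  "AND S x = (\<Prod>i\<in>S. if x ! i then 1 else 0)"

definition is_mobius_expansion :: "nat \<Rightarrow> (bool list \<Rightarrow> bool) \<Rightarrow> (nat set \<Rightarrow> real) \<Rightarrow> bool" where
  "is_mobius_expansion n f c \<longleftrightarrow>
     (\<forall>S. \<not> S \<subseteq> {..<n} \<longrightarrow> c S = 0) \<and>
     (\<forall>x\<in>cube n. (if f x then 1 else 0) = (\<Sum>S\<in>Pow {..<n}. c S * AND S x))"

definition mobius_coeff :: "nat \<Rightarrow> (bool list \<Rightarrow> bool) \<Rightarrow> nat set \<Rightarrow> real" where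
  "mobius_coeff n f = (THE c. is_mobius_expansion n f c)"

definition mobius_support :: "nat \<Rightarrow> (bool list \<Rightarrow> bool) \<Rightarrow> nat set set" where
  "mobius_support n f = {S \<in> Pow {..<n}. mobius_coeff n f S \<noteq> 0}"

definition spar :: "nat \<Rightarrow> (bool list \<Rightarrow> bool) \<Rightarrow> nat" where
  "spar n f = card (mobius_support n f)"

definition pattern :: "nat \<Rightarrow> (bool list \<Rightarrow> bool) \<Rightarrow> bool list \<Rightarrow> nat set \<Rightarrow> real" where
  "pattern n f x = (\<lambda>S. if S \<in> mobius_support n f then AND S x else 0)"

definition PatM :: "nat \<Rightarrow> (bool list \<Rightarrow> bool) \<Rightarrow> nat" where
  "PatM n f = card (pattern n f ` cube n)"

end

theory Submission
  imports Defs
begin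

definition ind :: "nat \<Rightarrow> nat set \<Rightarrow> bool list" where
  "ind n S = map (\<lambda>i. i \<in> S) [0..<n]"

lemma ind_cube: "ind n S \<in> cube n"
  by (simp add: ind_def cube_def)

lemma AND_ind_self: assumes "S \<subseteq> {..<n}" shows "AND S (ind n S) = 1"
proof -
  have "AND S (ind n S) = (\<Prod>i\<in>S. 1)"
    unfolding AND_def using assms by (intro prod.cong) (auto simp: ind_def)
  then show ?thesis by simp
qed

lemma AND_ind_other: assumes "S \<subseteq> {..<n}" "\<not> S \<subseteq> T" shows "AND S (ind n T) = 0"
proof -
  obtain i where i: "i \<in> S" "i \<notin> T" using assms(2) by blast
  have fin: "finite S" using assms(1) finite_subset by blast
  have "i < n" using i assms(1) by auto
  then have "\<not> ind n T ! i" using i by (simp add: ind_def)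
  then show ?thesis unfolding AND_def using fin i by (intro prod_zero) auto
qed

theorem claim4p2:
  fixes n :: nat and f :: "bool list \<Rightarrow> bool"
  shows "PatM n f \<ge> spar n f"
proof -
  let ?M = "mobius_support n f"
  let ?g = "\<lambda>S. pattern n f (ind n S)"
  have sub: "?M \<subseteq> Pow {..<n}" by (auto simp: mobius_support_def)
  have fincube: "finite (cube n)"
    unfolding cube_def using finite_lists_length_eq[of "UNIV::bool set" n] by simp
  have inj: "inj_on ?g ?M"
  proof (rule inj_onI)
    fix S T assume S: "S \<in> ?M" and T: "T \<in> ?M" and eq: "?g S = ?g T"
    show "S = T"
    proof (rule ccontr)
      assume ne: "S \<noteq> T"
      show False
      proof (cases "S \<subseteq> T")
        case True
        then have "\<not> T \<subseteq> S" using ne by blast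
        have "?g T T = 1" using T sub AND_ind_self[of T n] by (auto simp: pattern_def)
        moreover have "?g S T = 0" using T sub AND_ind_other[of T n S] \<open>\<not> T \<subseteq> S\<close>
          by (auto simp: pattern_def)
        ultimately show False using eq by simp
      next
        case False
        have "?g S S = 1" using S sub AND_ind_self[of S n] by (auto simp: pattern_def)
        moreover have "?g T S = 0" using S sub AND_ind_other[of S n T] False
          by (auto simp: pattern_def)
        ultimately show False using eq by simp
      qed
    qed
  qed
  have img: "?g ` ?M \<subseteq> pattern n f ` cube n" using ind_cube by blast
  have "card ?M \<le> card (pattern n f ` cube n)"
    by (rule card_inj_on_le[OF inj img]) (use fincube in simp)
  then show ?thesis by (simp add: PatM_def spar_def)
qed

end
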